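(* Let $A_1,A_2\subset\mathbb{Z}^2$ be finite with $|A_1|,|A_2|\ge2$ and $\mathbb{Z}A_1+\mathbb{Z}A_2=\mathbb{Z}^2$, and let $f=\bigoplus_{i\in A_1}p^1_i\odot w^i$, $g=\bigoplus_{i\in A_2}p^2_i\odot w^i$ be tropical polynomials with supports $A_1,A_2$. Let $q=(q_1,q_2)\in\mathcal{T}(f)\cap\mathcal{T}(g)$. Then $q$ is a non-transversal intersection point of $\mathcal{T}(f)$ and $\mathcal{T}(g)$ if and only if there exists $l\in\mathbb{R}$ such that $(q_1,q_2,l)$ is a singular point of $\mathcal{T}(f\oplus w_3\odot g)$.
   Context: $\mathbb{K}$ is an algebraically closed field of characteristic $0$ with a rank-one non-archimedean valuation $val$ whose residue field has characteristic $0$. Tropical operations $\oplus=\min$, $\odot=+$, $w^i=\langle i,w\rangle$, all coefficients real; $\mathcal{T}(h)$ is the set where the minimum of the terms of $h$ is attained at least twice. $f\oplus w_3\odot g$ denotes the tropical polynomial $\bigoplus_{i\in A_1}p^1_i\odot w^{(i,0)}\oplus\bigoplus_{i\in A_2}p^2_i\odot w^{(i,1)}$ in $w=(w_1,w_2,w_3)$, with support $A_1\times\{0\}\cup A_2\times\{1\}\subset\mathbb{Z}^3$. For a tropical polynomial $h=\bigoplus_{k\in S}c_k\odot w^k$, a point $\overline q\in\mathcal{T}(h)$ is singular if there exist $H=\sum_{k\in S}a_kx^k$ over $\mathbb{K}$ with $val(a_k)=c_k$ and $b\in(\mathbb{K}^* )^3$ with $val(b)=\overline q$ such that $H(b)=0$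 and all partial derivatives of $H$ vanish at $b$. A point $q\in\mathcal{T}(f)\cap\mathcal{T}(g)$ is a non-transversal intersection point if there exist $F=\sum_{i\in A_1}a^1_ix^i$, $G=\sum_{i\in A_2}a^2_ix^i$ over $\mathbb{K}$ with $val(a^1_i)=p^1_i$, $val(a^2_i)=p^2_i$, and $b\in(\mathbb{K}^* )^2$ with $val(b)=q$, such that $F(b)=G(b)=0$ and the system $F_{x_1}(b)y_1+G_{x_1}(b)y_2=F_{x_2}(b)y_1+G_{x_2}(b)y_2=0$ has a solution $(y_1,y_2)\in(\mathbb{K}^* )^2$. *)

theory Defs
  imports Main "HOL-Computational_Algebra.Polynomial"
begin

text \<open>A rank-one non-archimedean valuation on the field K: a map from K* to the
reals (its value on 0 is irrelevant and never used), turning products into sums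
and satisfying the ultrametric inequality.\<close>

definition nonarch_valuation :: "('k::field \<Rightarrow> real) \<Rightarrow> bool" where
  "nonarch_valuation val \<longleftrightarrow>
     (\<forall>x y. x \<noteq> 0 \<longrightarrow> y \<noteq> 0 \<longrightarrow> val (x * y) = val x + val y) \<and>
     (\<forall>x y. x \<noteq> 0 \<longrightarrow> y \<noteq> 0 \<longrightarrow> x + y \<noteq> 0 \<longrightarrow> val (x + y) \<ge> min (val x) (val y))"

text \<open>The residue field (valuation ring modulo maximal ideal) has characteristic 0:
no positive integer n lies in the maximal ideal, i.e. val(n) = 0.\<close>

definition residue_char_0 :: "('k::field_char_0 \<Rightarrow> real) \<Rightarrow> bool" where
  "residue_char_0 val \<longleftrightarrow> (\<forall>n::nat. n > 0 \<longrightarrow> val (of_nat n) = 0)"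

definition alg_closed :: "'k::field itself \<Rightarrow> bool" where
  "alg_closed TYPE('k) \<longleftrightarrow> (\<forall>p :: 'k poly. degree p > 0 \<longrightarrow> (\<exists>x. poly p x = 0))"

text \<open>The point w lies in T(h), h = min over k in S of (c k + <k,w>), if the
minimum is attained at least twice.\<close>

definition trop_min_twice :: "'i set \<Rightarrow> ('i \<Rightarrow> real) \<Rightarrow> bool" where
  "trop_min_twice S t \<longleftrightarrow>
     (\<exists>k1\<in>S. \<exists>k2\<in>S. k1 \<noteq> k2 \<and> t k1 = t k2 \<and> (\<forall>k\<in>S. t k1 \<le> t k))"

definition trop_hyp2 :: "(int \<times> int) set \<Rightarrow> (int \<times> int \<Rightarrow> real) \<Rightarrow> (real \<times> real) set" where
  "trop_hyp2 S c = {w. trop_min_twice S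
      (\<lambda>k. c k + real_of_int (fst k) * fst w + real_of_int (snd k) * snd w)}"

definition trop_hyp3 :: "(int \<times> int \<times> int) set \<Rightarrow> (int \<times> int \<times> int \<Rightarrow> real)
                          \<Rightarrow> (real \<times> real \<times> real) set" where
  "trop_hyp3 S c = {w. trop_min_twice S
      (\<lambda>k. c k + real_of_int (fst k) * fst w + real_of_int (fst (snd k)) * fst (snd w)
             + real_of_int (snd (snd k)) * snd (snd w))}"

definition lpoly2 :: "(int \<times> int) set \<Rightarrow> (int \<times> int \<Rightarrow> 'k::field) \<Rightarrow> 'k \<times> 'k \<Rightarrow> 'k" where
  "lpoly2 S a x = (\<Sum>k\<in>S. a k * fst x powi fst k * snd x powi snd k)"

definition lpoly2_d1 :: "(int \<times> int) set \<Rightarrow> (int \<times> int \<Rightarrow> 'k::field) \<Rightarrow> 'k \<times> 'k \<Rightarrow> 'k" where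
  "lpoly2_d1 S a x = (\<Sum>k\<in>S. a k * of_int (fst k) * fst x powi (fst k - 1) * snd x powi snd k)"

definition lpoly2_d2 :: "(int \<times> int) set \<Rightarrow> (int \<times> int \<Rightarrow> 'k::field) \<Rightarrow> 'k \<times> 'k \<Rightarrow> 'k" where
  "lpoly2_d2 S a x = (\<Sum>k\<in>S. a k * of_int (snd k) * fst x powi fst k * snd x powi (snd k - 1))"

definition lpoly3 :: "(int \<times> int \<times> int) set \<Rightarrow> (int \<times> int \<times> int \<Rightarrow> 'k::field) \<Rightarrow> 'k \<times> 'k \<times> 'k \<Rightarrow> 'k" where
  "lpoly3 S a x = (\<Sum>k\<in>S. a k * fst x powi fst k * fst (snd x) powi fst (snd k)
                              * snd (snd x) powi snd (snd k))"

definition lpoly3_d1 :: "(int \<times> int \<times> int) set \<Rightarrow> (int \<times> int \<times> int \<Rightarrow> 'k::field) \<Rightarrow> 'k \<times> 'k \<times> 'k \<Rightarrow> 'k" where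
  "lpoly3_d1 S a x = (\<Sum>k\<in>S. a k * of_int (fst k) * fst x powi (fst k - 1)
                              * fst (snd x) powi fst (snd k) * snd (snd x) powi snd (snd k))"

definition lpoly3_d2 :: "(int \<times> int \<times> int) set \<Rightarrow> (int \<times> int \<times> int \<Rightarrow> 'k::field) \<Rightarrow> 'k \<times> 'k \<times> 'k \<Rightarrow> 'k" where
  "lpoly3_d2 S a x = (\<Sum>k\<in>S. a k * of_int (fst (snd k)) * fst x powi fst k
                              * fst (snd x) powi (fst (snd k) - 1) * snd (snd x) powi snd (snd k))"

definition lpoly3_d3 :: "(int \<times> int \<times> int) set \<Rightarrow> (int \<times> int \<times> int \<Rightarrow> 'k::field) \<Rightarrow> 'k \<times> 'k \<times> 'k \<Rightarrow> 'k" where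
  "lpoly3_d3 S a x = (\<Sum>k\<in>S. a k * of_int (snd (snd k)) * fst x powi fst k
                              * fst (snd x) powi fst (snd k) * snd (snd x) powi (snd (snd k) - 1))"

definition lifts :: "('k::field \<Rightarrow> real) \<Rightarrow> 'i set \<Rightarrow> ('i \<Rightarrow> 'k) \<Rightarrow> ('i \<Rightarrow> real) \<Rightarrow> bool" where
  "lifts val S a c \<longleftrightarrow> (\<forall>k\<in>S. a k \<noteq> 0 \<and> val (a k) = c k)"

definition trop_singular3 ::
  "('k::field \<Rightarrow> real) \<Rightarrow> (int \<times> int \<times> int) set \<Rightarrow> (int \<times> int \<times> int \<Rightarrow> real)
     \<Rightarrow> real \<times> real \<times> real \<Rightarrow> bool" where
  "trop_singular3 val S c q \<longleftrightarrow> q \<in> trop_hyp3 S c \<and>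
     (\<exists>(a :: int \<times> int \<times> int \<Rightarrow> 'k) (b :: 'k \<times> 'k \<times> 'k).
        lifts val S a c \<and>
        fst b \<noteq> 0 \<and> fst (snd b) \<noteq> 0 \<and> snd (snd b) \<noteq> 0 \<and>
        val (fst b) = fst q \<and> val (fst (snd b)) = fst (snd q) \<and> val (snd (snd b)) = snd (snd q) \<and>
        lpoly3 S a b = 0 \<and> lpoly3_d1 S a b = 0 \<and> lpoly3_d2 S a b = 0 \<and> lpoly3_d3 S a b = 0)"

definition non_transversal ::
  "('k::field \<Rightarrow> real) \<Rightarrow> (int \<times> int) set \<Rightarrow> (int \<times> int \<Rightarrow> real)
     \<Rightarrow> (int \<times> int) set \<Rightarrow> (int \<times> int \<Rightarrow> real) \<Rightarrow> real \<times> real \<Rightarrow> bool" where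
  "non_transversal val A1 p1 A2 p2 q \<longleftrightarrow> q \<in> trop_hyp2 A1 p1 \<and> q \<in> trop_hyp2 A2 p2 \<and>
     (\<exists>(a1 :: int \<times> int \<Rightarrow> 'k) (a2 :: int \<times> int \<Rightarrow> 'k) (b :: 'k \<times> 'k).
        lifts val A1 a1 p1 \<and> lifts val A2 a2 p2 \<and>
        fst b \<noteq> 0 \<and> snd b \<noteq> 0 \<and> val (fst b) = fst q \<and> val (snd b) = snd q \<and>
        lpoly2 A1 a1 b = 0 \<and> lpoly2 A2 a2 b = 0 \<and>
        (\<exists>y1 y2. y1 \<noteq> 0 \<and> y2 \<noteq> 0 \<and>
            lpoly2_d1 A1 a1 b * y1 + lpoly2_d1 A2 a2 b * y2 = 0 \<and>
            lpoly2_d2 A1 a1 b * y1 + lpoly2_d2 A2 a2 b * y2 = 0))"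

section \<open>Cayley configuration f (+) w3 (.) g\<close>

definition cayley_supp :: "(int \<times> int) set \<Rightarrow> (int \<times> int) set \<Rightarrow> (int \<times> int \<times> int) set" where
  "cayley_supp A1 A2 = (\<lambda>i. (fst i, snd i, 0)) ` A1 \<union> (\<lambda>i. (fst i, snd i, 1)) ` A2"

definition cayley_coeff :: "(int \<times> int \<Rightarrow> real) \<Rightarrow> (int \<times> int \<Rightarrow> real) \<Rightarrow> int \<times> int \<times> int \<Rightarrow> real" where
  "cayley_coeff p1 p2 k = (if snd (snd k) = 0 then p1 (fst k, fst (snd k)) else p2 (fst k, fst (snd k)))"

definition int_span2 :: "(int \<times> int) set \<Rightarrow> (int \<times> int) set" where
  "int_span2 A = {(\<Sum>i\<in>A. c i * fst i, \<Sum>i\<in>A. c i * snd i) | c :: int \<times> int \<Rightarrow> int. True}"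

end

theory Submission imports Defs begin

lemma val_one: assumes "nonarch_valuation val" shows "val (1::'k::field) = 0"
proof -
  have "val (1*1::'k) = val 1 + val 1" using assms unfolding nonarch_valuation_def
    by (metis one_neq_zero)
  thus ?thesis by simp
qed

lemma val_mult: assumes "nonarch_valuation val" "x \<noteq> 0" "y \<noteq> 0"
  shows "val (x * y::'k::field) = val x + val y"
  using assms unfolding nonarch_valuation_def by simp

lemma val_inverse: assumes "nonarch_valuation val" "(x::'k::field) \<noteq> 0"
  shows "val (inverse x) = - val x"
proof -
  have "inverse x \<noteq> 0" using assms(2) by simp
  hence "val (x * inverse x) = val x + val (inverse x)" using val_mult[OF assms(1) assms(2)] by blast
  moreover have "x * inverse x = 1" using assms(2) by simp
  ultimately show ?thesis using val_one[OF assms(1)] by simp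
qed

lemma val_power: assumes "nonarch_valuation val" "(x::'k::field) \<noteq> 0"
  shows "val (x ^ n) = real n * val x"
proof (induction n)
  case 0 thus ?case by (simp add: val_one[OF assms(1)])
next
  case (Suc n)
  have "x ^ n \<noteq> 0" using assms(2) by simp
  hence "val (x * x ^ n) = val x + val (x ^ n)" using val_mult[OF assms(1) assms(2)] by blast
  thus ?case using Suc by (simp add: algebra_simps)
qed

lemma val_powi: assumes "nonarch_valuation val" "(x::'k::field) \<noteq> 0"
  shows "val (x powi n) = real_of_int n * val x"
proof (cases "n \<ge> 0")
  case True thus ?thesis using val_power[OF assms, of "nat n"] by (simp add: power_int_def)
next
  case False
  have "inverse x \<noteq> 0" using assms by simp
  hence "val (inverse x ^ nat (-n)) = real (nat (-n)) * val (inverse x)"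
    using val_power[OF assms(1)] by blast
  thus ?thesis using False val_inverse[OF assms] by (simp add: power_int_def)
qed

lemma val_uminus: assumes "nonarch_valuation val" "(x::'k::field) \<noteq> 0"
  shows "val (- x) = val x"
proof -
  have m1: "(-1::'k) \<noteq> 0" by simp
  have "val ((-1)*(-1)::'k) = val (-1) + val (-1)" using val_mult[OF assms(1) m1 m1] .
  hence v: "val (-1::'k) = 0" using val_one[OF assms(1)] by simp
  have "val ((-1)*x) = val (-1) + val x" using val_mult[OF assms(1) m1 assms(2)] .
  thus ?thesis using v by simp
qed

lemma val_sum_gt: assumes "nonarch_valuation val" "finite T"
  "\<forall>k\<in>T. f k \<noteq> (0::'k::field) \<and> val (f k) > m" "sum f T \<noteq> 0"
  shows "val (sum f T) > m"
  using assms(2,3,4)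
proof (induction T rule: finite_induct)
  case empty thus ?case by simp
next
  case (insert x T)
  have s: "sum f (insert x T) = f x + sum f T" using insert by simp
  show ?case
  proof (cases "sum f T = 0")
    case True thus ?thesis using s insert by simp
  next
    case False
    hence "val (sum f T) > m" using insert by simp
    moreover have "val (f x + sum f T) \<ge> min (val (f x)) (val (sum f T))"
      using assms(1) False insert(4,5) s unfolding nonarch_valuation_def by auto
    moreover have "m < val (f x)" using insert.prems by simp
    ultimately have "m < val (f x + sum f T)" by linarith
    thus ?thesis using s by simp
  qed
qed

lemma sum_zero_min_twice:
  assumes "nonarch_valuation val" "finite S" "S \<noteq> {}" "\<forall>k\<in>S. f k \<noteq> (0::'k::field)" "sum f S = 0"
  shows "trop_min_twice S (\<lambda>k. val (f k))"
proof -
  define m where "m = Min ((\<lambda>k. val (f k)) ` S)"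
  have "m \<in> (\<lambda>k. val (f k)) ` S" unfolding m_def using assms(2,3) by simp
  then obtain k0 where k0: "k0 \<in> S" "val (f k0) = m" by auto
  have mle: "\<forall>k\<in>S. m \<le> val (f k)" unfolding m_def using assms(2) by simp
  have "\<exists>k1\<in>S. k1 \<noteq> k0 \<and> val (f k1) = m"
  proof (rule ccontr)
    assume nn: "\<not> ?thesis"
    let ?T = "S - {k0}"
    have T: "\<forall>k\<in>?T. f k \<noteq> 0 \<and> val (f k) > m" using nn mle assms(4) by force
    have s: "sum f S = f k0 + sum f ?T" using assms(2) k0(1) by (simp add: sum.remove)
    show False
    proof (cases "sum f ?T = 0")
      case True thus False using s assms(4,5) k0 by simp
    next
      case False
      have "val (sum f ?T) > m" using val_sum_gt[OF assms(1) _ T False] assms(2) by simp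
      moreover have "sum f ?T = - f k0" using s assms(5) by (simp add: eq_neg_iff_add_eq_0 add.commute)
      ultimately show False using val_uminus[OF assms(1), of "f k0"] assms(4) k0 by simp
    qed
  qed
  then obtain k1 where "k1 \<in> S" "k1 \<noteq> k0" "val (f k1) = m" by auto
  thus ?thesis unfolding trop_min_twice_def using k0 mle by (metis)
qed

lemma sum_cayley: assumes "finite A1" "finite A2"
  shows "(\<Sum>k\<in>cayley_supp A1 A2. h k) = (\<Sum>i\<in>A1. h (fst i, snd i, 0)) + (\<Sum>i\<in>A2. h (fst i, snd i, 1))"
proof -
  have d: "(\<lambda>i. (fst i, snd i, 0::int)) ` A1 \<inter> (\<lambda>i. (fst i, snd i, 1)) ` A2 = {}" by auto
  have i1: "inj_on (\<lambda>i::int\<times>int. (fst i, snd i, 0::int)) A1" by (auto simp: inj_on_def prod_eq_iff)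
  have i2: "inj_on (\<lambda>i::int\<times>int. (fst i, snd i, 1::int)) A2" by (auto simp: inj_on_def prod_eq_iff)
  show ?thesis unfolding cayley_supp_def
    using assms d by (simp add: sum.union_disjoint sum.reindex[OF i1] sum.reindex[OF i2])
qed

theorem lemma5p2:
  fixes val :: "'k::field_char_0 \<Rightarrow> real"
    and A1 A2 :: "(int \<times> int) set"
    and p1 p2 :: "int \<times> int \<Rightarrow> real"
    and q :: "real \<times> real"
  assumes "alg_closed TYPE('k)"
    and "nonarch_valuation val"
    and "residue_char_0 val"
    and "finite A1" and "finite A2"
    and "card A1 \<ge> 2" and "card A2 \<ge> 2"
    and "\<forall>z::int \<times> int. \<exists>u\<in>int_span2 A1. \<exists>v\<in>int_span2 A2.
            z = (fst u + fst v, snd u + snd v)"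
    and "q \<in> trop_hyp2 A1 p1" and "q \<in> trop_hyp2 A2 p2"
  shows "non_transversal val A1 p1 A2 p2 q \<longleftrightarrow>
         (\<exists>l::real. trop_singular3 val (cayley_supp A1 A2) (cayley_coeff p1 p2) (fst q, snd q, l))"
proof -
  have nv: "nonarch_valuation val" by fact
  have fA: "finite A1" "finite A2" by fact+
  let ?S = "cayley_supp A1 A2"
  let ?c = "cayley_coeff p1 p2"
  have finS: "finite ?S" unfolding cayley_supp_def using fA by simp
  have neS: "?S \<noteq> {}" using assms(6) unfolding cayley_supp_def by auto
  show ?thesis
  proof
    assume "non_transversal val A1 p1 A2 p2 q"
    then obtain a1 a2 b y1 y2 where
      L1: "lifts val A1 a1 p1" and L2: "lifts val A2 a2 p2" and
      b: "fst b \<noteq> 0" "snd b \<noteq> 0" "val (fst b) = fst q" "val (snd b) = snd q" and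
      F: "lpoly2 A1 a1 b = 0" and G: "lpoly2 A2 a2 b = 0" and
      y: "y1 \<noteq> 0" "y2 \<noteq> 0" "lpoly2_d1 A1 a1 b * y1 + lpoly2_d1 A2 a2 b * y2 = 0"
         "lpoly2_d2 A1 a1 b * y1 + lpoly2_d2 A2 a2 b * y2 = 0"
      unfolding non_transversal_def by blast
    define b3 where "b3 = y2 / y1"
    have b3: "b3 \<noteq> 0" using y unfolding b3_def by simp
    define a :: "int \<times> int \<times> int \<Rightarrow> 'k" where
      "a k = (if snd (snd k) = 0 then a1 (fst k, fst (snd k)) else a2 (fst k, fst (snd k)))" for k
    define bb where "bb = (fst b, snd b, b3)"
    define l where "l = val b3"
    have La: "lifts val ?S a ?c"
      using L1 L2 unfolding lifts_def cayley_supp_def a_def cayley_coeff_def by auto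
    have H: "lpoly3 ?S a bb = lpoly2 A1 a1 b + b3 * lpoly2 A2 a2 b"
      unfolding lpoly3_def lpoly2_def sum_cayley[OF fA] a_def bb_def
      by (simp add: sum_distrib_left algebra_simps)
    have H1: "lpoly3_d1 ?S a bb = lpoly2_d1 A1 a1 b + b3 * lpoly2_d1 A2 a2 b"
      unfolding lpoly3_d1_def lpoly2_d1_def sum_cayley[OF fA] a_def bb_def
      by (simp add: sum_distrib_left algebra_simps)
    have H2: "lpoly3_d2 ?S a bb = lpoly2_d2 A1 a1 b + b3 * lpoly2_d2 A2 a2 b"
      unfolding lpoly3_d2_def lpoly2_d2_def sum_cayley[OF fA] a_def bb_def
      by (simp add: sum_distrib_left algebra_simps)
    have H3: "lpoly3_d3 ?S a bb = lpoly2 A2 a2 b"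
      unfolding lpoly3_d3_def lpoly2_def sum_cayley[OF fA] a_def bb_def
      by (simp add: sum_distrib_left algebra_simps)
    have e1: "lpoly2_d1 A1 a1 b + b3 * lpoly2_d1 A2 a2 b = 0"
    proof -
      have "lpoly2_d1 A1 a1 b + b3 * lpoly2_d1 A2 a2 b
          = (lpoly2_d1 A1 a1 b * y1 + lpoly2_d1 A2 a2 b * y2) / y1"
        using y(1) unfolding b3_def by (simp add: field_simps)
      thus ?thesis using y(3) by simp
    qed
    have e2: "lpoly2_d2 A1 a1 b + b3 * lpoly2_d2 A2 a2 b = 0"
    proof -
      have "lpoly2_d2 A1 a1 b + b3 * lpoly2_d2 A2 a2 b
          = (lpoly2_d2 A1 a1 b * y1 + lpoly2_d2 A2 a2 b * y2) / y1"
        using y(1) unfolding b3_def by (simp add: field_simps)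
      thus ?thesis using y(4) by simp
    qed
    have mem: "(fst q, snd q, l) \<in> trop_hyp3 ?S ?c"
    proof -
      let ?f = "\<lambda>k. a k * fst bb powi fst k * fst (snd bb) powi fst (snd k) * snd (snd bb) powi snd (snd k)"
      have nz: "\<forall>k\<in>?S. ?f k \<noteq> 0" using La b b3 unfolding lifts_def bb_def by simp
      have "sum ?f ?S = 0" using H F G unfolding lpoly3_def by simp
      hence tm: "trop_min_twice ?S (\<lambda>k. val (?f k))"
        using sum_zero_min_twice[OF nv finS neS nz] by simp
      have eq: "\<forall>k\<in>?S. val (?f k) = ?c k + real_of_int (fst k) * fst q
              + real_of_int (fst (snd k)) * snd q + real_of_int (snd (snd k)) * l"
      proof
        fix k assume k: "k \<in> ?S"
        have ak: "a k \<noteq> 0" "val (a k) = ?c k" using La k unfolding lifts_def by auto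
        have p1: "fst bb powi fst k \<noteq> 0" "fst (snd bb) powi fst (snd k) \<noteq> 0"
             "snd (snd bb) powi snd (snd k) \<noteq> 0" using b b3 unfolding bb_def by auto
        have "val (?f k) = val (a k) + val (fst bb powi fst k) + val (fst (snd bb) powi fst (snd k))
              + val (snd (snd bb) powi snd (snd k))"
          using ak p1 by (simp add: val_mult[OF nv])
        also have "\<dots> = ?c k + real_of_int (fst k) * fst q
              + real_of_int (fst (snd k)) * snd q + real_of_int (snd (snd k)) * l"
          using ak b b3 unfolding bb_def l_def by (simp add: val_powi[OF nv])
        finally show "val (?f k) = ?c k + real_of_int (fst k) * fst q
              + real_of_int (fst (snd k)) * snd q + real_of_int (snd (snd k)) * l" .
      qed
      have "trop_min_twice ?S (\<lambda>k. ?c k + real_of_int (fst k) * fst q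
              + real_of_int (fst (snd k)) * snd q + real_of_int (snd (snd k)) * l)"
        using tm eq unfolding trop_min_twice_def by (smt (verit))
      thus ?thesis unfolding trop_hyp3_def by simp
    qed
    have "trop_singular3 val ?S ?c (fst q, snd q, l)"
      unfolding trop_singular3_def
      apply (rule conjI[OF mem])
      apply (rule exI[of _ a], rule exI[of _ bb])
      using La b b3 H H1 H2 H3 F G e1 e2 unfolding bb_def l_def by simp
    thus "\<exists>l. trop_singular3 val ?S ?c (fst q, snd q, l)" by blast
  next
    assume "\<exists>l. trop_singular3 val ?S ?c (fst q, snd q, l)"
    then obtain l a bb where La: "lifts val ?S a ?c" and
      bb: "fst bb \<noteq> 0" "fst (snd bb) \<noteq> 0" "snd (snd bb) \<noteq> 0"
        "val (fst bb) = fst q" "val (fst (snd bb)) = snd q" and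
      Z: "lpoly3 ?S a bb = 0" "lpoly3_d1 ?S a bb = 0" "lpoly3_d2 ?S a bb = 0" "lpoly3_d3 ?S a bb = 0"
      unfolding trop_singular3_def by auto
    define a1 where "a1 i = a (fst i, snd i, 0)" for i
    define a2 where "a2 i = a (fst i, snd i, 1)" for i
    define b where "b = (fst bb, fst (snd bb))"
    define b3 where "b3 = snd (snd bb)"
    have L1: "lifts val A1 a1 p1" using La unfolding lifts_def cayley_supp_def a1_def cayley_coeff_def by auto
    have L2: "lifts val A2 a2 p2" using La unfolding lifts_def cayley_supp_def a2_def cayley_coeff_def by auto
    have H: "lpoly3 ?S a bb = lpoly2 A1 a1 b + b3 * lpoly2 A2 a2 b"
      unfolding lpoly3_def lpoly2_def sum_cayley[OF fA] a1_def a2_def b_def b3_def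
      by (simp add: sum_distrib_left algebra_simps)
    have H1: "lpoly3_d1 ?S a bb = lpoly2_d1 A1 a1 b + b3 * lpoly2_d1 A2 a2 b"
      unfolding lpoly3_d1_def lpoly2_d1_def sum_cayley[OF fA] a1_def a2_def b_def b3_def
      by (simp add: sum_distrib_left algebra_simps)
    have H2: "lpoly3_d2 ?S a bb = lpoly2_d2 A1 a1 b + b3 * lpoly2_d2 A2 a2 b"
      unfolding lpoly3_d2_def lpoly2_d2_def sum_cayley[OF fA] a1_def a2_def b_def b3_def
      by (simp add: sum_distrib_left algebra_simps)
    have H3: "lpoly3_d3 ?S a bb = lpoly2 A2 a2 b"
      unfolding lpoly3_d3_def lpoly2_def sum_cayley[OF fA] a1_def a2_def b_def b3_def
      by (simp add: sum_distrib_left algebra_simps)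
    have G: "lpoly2 A2 a2 b = 0" using H3 Z by simp
    have F: "lpoly2 A1 a1 b = 0" using H Z G by simp
    show "non_transversal val A1 p1 A2 p2 q"
      unfolding non_transversal_def
      apply (intro conjI assms(9,10))
      apply (rule exI[of _ a1], rule exI[of _ a2], rule exI[of _ b])
      using L1 L2 bb F G H1 H2 Z unfolding b_def b3_def
      apply simp
      apply (rule exI[of _ 1], simp)
      apply (rule exI[of _ "snd (snd bb)"])
      by (simp add: mult.commute)
  qed
qed

end
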